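(* For every $a>0$ and $\alpha>0$, the second Robin eigenvalue of an interval $I_a$ of length $a$ satisfies \[ \frac{\big(2\pi-a\alpha+\sqrt{4\pi^2+12a\alpha\pi+\alpha^2a^2}\big)^2}{16a^2}\le\lambda_2(I_a,\alpha) \] and \[ \lambda_2(I_a,\alpha)\le\begin{cases}\Big(\dfrac{\pi}{2a}+\sqrt{\dfrac{\pi^2}{4a^2}+\dfrac{2\alpha}{a}}\Big)^2, & a\alpha\le\dfrac{\pi^2}{2},\\[2ex] \dfrac{\pi^2}{16a^4\alpha^2}\Big(4a\alpha-\pi^2+\sqrt{\pi^4+16a^2\alpha^2}\Big)^2, & a\alpha\ge\dfrac{\pi^2}{2}.\end{cases} \]
   Context: For an interval $I_a\subset\mathbb{R}$ of length $a>0$ and $\alpha>0$, $\lambda_1(I_a,\alpha)<\lambda_2(I_a,\alpha)<\cdots$ denote the eigenvalues of the Robin problem $-u''=\lambda u$ on $I_a$ with $\partial_\nu u+\alpha u=0$ at both endpoints ($\partial_\nu$ the outward derivative). Equivalently, $\lambda_2(I_a,\alpha)$ is the smallest root in $(\pi^2/a^2,4\pi^2/a^2)$ of $\alpha=-\sqrt\lambda\cot(a\sqrt\lambda/2)$. *)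

theory Defs
  imports "HOL-Analysis.Analysis"
begin

text \<open>Robin eigenvalue problem on the interval I = [c, c+a]:
  -u'' = lam u on I, with outward-derivative Robin condition
  d_nu u + alpha u = 0 at both endpoints, i.e.
  -u'(c) + alpha u(c) = 0 and u'(c+a) + alpha u(c+a) = 0.
  Eigenfunctions are classical C^2 functions on the closed interval
  (one-sided derivatives at the endpoints), not identically zero.\<close>

definition robin_eigenvalue :: "real \<Rightarrow> real \<Rightarrow> real \<Rightarrow> real \<Rightarrow> bool" where
  "robin_eigenvalue c a alpha lam \<longleftrightarrow>
     (\<exists>u u' u''. (\<exists>x\<in>{c..c+a}. u x \<noteq> 0) \<and>
        (\<forall>x\<in>{c..c+a}. (u has_real_derivative u' x) (at x within {c..c+a})) \<and>
        (\<forall>x\<in>{c..c+a}. (u' has_real_derivative u'' x) (at x within {c..c+a})) \<and>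
        continuous_on {c..c+a} u'' \<and>
        (\<forall>x\<in>{c..c+a}. - u'' x = lam * u x) \<and>
        - u' c + alpha * u c = 0 \<and>
        u' (c + a) + alpha * u (c + a) = 0)"

text \<open>lambda_k with eigenvalues listed increasingly (1D Robin eigenvalues are simple):
  lambda_2 is the eigenvalue having exactly one eigenvalue strictly below it.\<close>

definition robin_lambda2 :: "real \<Rightarrow> real \<Rightarrow> real \<Rightarrow> real" where
  "robin_lambda2 c a alpha =
     (THE lam. robin_eigenvalue c a alpha lam \<and>
        card {mu. robin_eigenvalue c a alpha mu \<and> mu < lam} = 1)"

end

theory Submission
  imports Defs
begin

lemma T1: fixes r :: real assumes "0 \<le> r" "r \<le> pi" shows "r * cos r \<le> sin r"
proof -
  let ?f = "\<lambda>x::real. sin x - x * cos x"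
  have "?f 0 \<le> ?f r"
  proof (rule DERIV_nonneg_imp_nondecreasing[OF assms(1)])
    fix x assume "0 \<le> x" "x \<le> r"
    then have "x * sin x \<ge> 0" using assms by (simp add: sin_ge_zero)
    moreover have "(?f has_real_derivative x * sin x) (at x)"
      by (auto intro!: derivative_eq_intros simp: algebra_simps)
    ultimately show "\<exists>y. (?f has_real_derivative y) (at x) \<and> 0 \<le> y" by blast
  qed
  then show ?thesis by simp
qed

lemma T4: fixes r :: real assumes "0 \<le> r" "r \<le> pi" shows "r * cos r \<le> (1 - r^2/3) * sin r"
proof -
  let ?f = "\<lambda>x::real. (1 - x^2/3) * sin x - x * cos x"
  have "?f 0 \<le> ?f r"
  proof (rule DERIV_nonneg_imp_nondecreasing[OF assms(1)])
    fix x assume "0 \<le> x" "x \<le> r"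
    then have "x/3 * (sin x - x * cos x) \<ge> 0" using assms T1[of x] by simp
    moreover have "(?f has_real_derivative x/3 * (sin x - x * cos x)) (at x)"
      by (auto intro!: derivative_eq_intros simp: algebra_simps power2_eq_square)
    ultimately show "\<exists>y. (?f has_real_derivative y) (at x) \<and> 0 \<le> y" by blast
  qed
  then show ?thesis by simp
qed

lemma C2: fixes x :: real assumes "0 \<le> x" shows "1 - x^2/2 \<le> cos x"
proof -
  let ?f = "\<lambda>x::real. cos x - 1 + x^2/2"
  have "?f 0 \<le> ?f x"
  proof (rule DERIV_nonneg_imp_nondecreasing[OF assms(1)])
    fix y assume "0 \<le> y" "y \<le> x"
    then have "y - sin y \<ge> 0" using sin_x_le_x by simp
    moreover have "(?f has_real_derivative y - sin y) (at y)"
      by (auto intro!: derivative_eq_intros simp: algebra_simps)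
    ultimately show "\<exists>z. (?f has_real_derivative z) (at y) \<and> 0 \<le> z" by blast
  qed
  then show ?thesis by simp
qed

lemma S3: fixes x :: real assumes "0 \<le> x" shows "x - x^3/6 \<le> sin x"
proof -
  let ?f = "\<lambda>x::real. sin x - x + x^3/6"
  have "?f 0 \<le> ?f x"
  proof (rule DERIV_nonneg_imp_nondecreasing[OF assms(1)])
    fix y assume "0 \<le> y" "y \<le> x"
    then have "cos y - 1 + y^2/2 \<ge> 0" using C2[of y] by simp
    moreover have "(?f has_real_derivative cos y - 1 + y^2/2) (at y)"
      by (auto intro!: derivative_eq_intros simp: algebra_simps power2_eq_square)
    ultimately show "\<exists>z. (?f has_real_derivative z) (at y) \<and> 0 \<le> z" by blast
  qed
  then show ?thesis by simp
qed

lemma T2: fixes r :: real assumes r: "0 < r" "r < pi/2"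
  shows "(pi/2 - r) * sin r \<le> 2 * r * cos r"
proof (cases "r \<le> 1.3")
  case True
  have s: "sin r \<le> r" using sin_x_le_x r by simp
  have c: "1 - r^2/2 \<le> cos r" using C2 r by simp
  have "(pi/2 - r) * sin r \<le> (pi/2 - r) * r" using s r by (intro mult_left_mono) auto
  also have "\<dots> \<le> 2 * r * (1 - r^2/2)"
  proof -
    have "(r - 1.3) * (r + 0.3) \<le> 0" using True r by (intro mult_nonpos_nonneg) auto
    then have "r^2 - r \<le> 2 - pi/2" using pi_approx by (simp add: algebra_simps power2_eq_square)
    then have "pi/2 - r \<le> 2 - r^2" by simp
    then have "r * (pi/2 - r) \<le> r * (2 - r^2)" using r by (intro mult_left_mono) auto
    then show ?thesis by (simp add: algebra_simps power2_eq_square)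
  qed
  also have "\<dots> \<le> 2 * r * cos r" using c r by (intro mult_left_mono) auto
  finally show ?thesis .
next
  case False
  define s where "s = pi/2 - r"
  have s0: "0 < s" "s \<le> 0.28" using r False pi_approx by (auto simp: s_def)
  have cr: "cos r = sin s" by (simp add: s_def sin_cos_eq)
  have ss: "s - s^3/6 \<le> sin s" using S3 s0 by simp
  have "(pi/2 - r) * sin r \<le> s" using s0 by (simp add: s_def mult_left_le)
  also have "s \<le> 2 * r * (s - s^3/6)"
  proof -
    have "s * s \<le> 0.28 * 0.28" using s0 by (intro mult_mono) auto
    then have h: "0.98 \<le> 1 - s^2/6" by (simp add: power2_eq_square)
    have "2 * 1.3 * 0.98 \<le> 2 * r * (1 - s^2/6)" using False h by (intro mult_mono) auto
    then have "1 \<le> 2 * r * (1 - s^2/6)" by simp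
    then have "s * 1 \<le> s * (2 * r * (1 - s^2/6))" using s0 by (intro mult_left_mono) auto
    then show ?thesis by (simp add: algebra_simps power2_eq_square power3_eq_cube)
  qed
  also have "\<dots> \<le> 2 * r * cos r" using ss r cr by (intro mult_left_mono) auto
  finally show ?thesis .
qed

lemma T3: fixes r :: real assumes r: "0 < r" "r < pi/2"
  shows "pi^3 * r * cos r \<le> (pi + 2*r) * (pi^2 - 4*r^2) * sin r"
proof (cases "r \<le> 0.4 * pi")
  case True
  have sp: "sin r > 0" using r by (intro sin_gt_zero) auto
  have t4: "r * cos r \<le> (1 - r^2/3) * sin r" using T4[of r] r by simp
  have "3.1 * 3.1 \<le> pi * pi" using pi_approx by (intro mult_mono) auto
  then have pa: "pi^2 \<ge> 9.6" by (simp add: power2_eq_square)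
  have q1: "pi^3 * r / 3 \<ge> 16/5 * pi * r"
  proof -
    have "pi * r * 9.6 \<le> pi * r * pi^2" using pa r by (intro mult_left_mono) auto
    then show ?thesis by (simp add: power2_eq_square power3_eq_cube algebra_simps)
  qed
  have q2: "4/5 * pi * r \<le> 8/25 * pi^2" using True by (simp add: power2_eq_square)
  have q3: "8 * r^2 \<le> 32/25 * pi^2"
  proof -
    have "r * r \<le> (0.4*pi) * (0.4*pi)" using True r by (intro mult_mono) auto
    then show ?thesis by (simp add: power2_eq_square)
  qed
  have Q: "0 \<le> 2*pi^2 - 4*pi*r - 8*r^2 + pi^3*r/3" using q1 q2 q3 pa by linarith
  have "(pi + 2*r) * (pi^2 - 4*r^2) - pi^3 * (1 - r^2/3) = r * (2*pi^2 - 4*pi*r - 8*r^2 + pi^3*r/3)"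
    by (simp add: algebra_simps power2_eq_square power3_eq_cube)
  also have "\<dots> \<ge> 0" using Q r by simp
  finally have poly: "pi^3 * (1 - r^2/3) \<le> (pi + 2*r) * (pi^2 - 4*r^2)" by simp
  have "pi^3 * r * cos r = pi^3 * (r * cos r)" by simp
  also have "\<dots> \<le> pi^3 * ((1 - r^2/3) * sin r)" using t4 by (intro mult_left_mono) auto
  also have "\<dots> = (pi^3 * (1 - r^2/3)) * sin r" by simp
  also have "\<dots> \<le> (pi + 2*r) * (pi^2 - 4*r^2) * sin r" using poly sp by (intro mult_right_mono) auto
  finally show ?thesis .
next
  case False
  define s where "s = pi/2 - r"
  have s0: "0 < s" "s < 0.1 * pi" using r False by (auto simp: s_def)
  have cr: "cos r = sin s" by (simp add: s_def sin_cos_eq)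
  have sr: "sin r = cos s" by (simp add: s_def cos_sin_eq)
  have sins: "sin s \<le> s" "0 \<le> sin s" using sin_x_le_x s0 by (auto intro!: sin_ge_zero)
  have "pi^3 * r * cos r \<le> pi^3 * (pi/2) * s"
  proof -
    have "r * sin s \<le> (pi/2) * s" using r sins by (intro mult_mono) auto
    then have "pi^3 * (r * sin s) \<le> pi^3 * ((pi/2) * s)" by (intro mult_left_mono) auto
    then show ?thesis using cr by simp
  qed
  also have "\<dots> \<le> (1.8 * pi)^2 * (2 * s) * 0.94"
  proof -
    have "pi * pi \<le> 3.2 * 3.2" using pi_approx by (intro mult_mono) auto
    then have "pi^2 \<le> 12" by (simp add: power2_eq_square)
    then have "pi^2 * s \<le> 12 * s" using s0 by (intro mult_right_mono) auto
    then have "pi^2 * s / 2 \<le> 6.0912 * s" using s0 by simp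
    then have m: "pi^2 * (pi^2 * s / 2) \<le> pi^2 * (6.0912 * s)" by (intro mult_left_mono) auto
    have "pi^3 * (pi/2) * s = pi^2 * (pi^2 * s / 2)" by (simp add: power2_eq_square power3_eq_cube)
    also have "\<dots> \<le> pi^2 * (6.0912 * s)" by (rule m)
    also have "\<dots> = (1.8 * pi)^2 * (2 * s) * 0.94" by (simp add: power2_eq_square)
    finally show ?thesis .
  qed
  also have "\<dots> \<le> (pi + 2*r) * (pi^2 - 4*r^2) * sin r"
  proof -
    have P: "1.8 * pi \<le> pi + 2*r" using False by simp
    have c: "0.94 \<le> cos s"
    proof -
      have "s * s \<le> (0.1*pi) * (0.1*pi)" using s0 by (intro mult_mono) auto
      moreover have "pi * pi \<le> 3.2 * 3.2" using pi_approx by (intro mult_mono) auto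
      ultimately have "s^2 \<le> 0.11" by (simp add: power2_eq_square)
      then show ?thesis using C2[of s] s0 by simp
    qed
    have e: "(pi + 2*r) * (pi^2 - 4*r^2) * sin r = (pi + 2*r)^2 * (2 * s) * cos s"
      by (simp add: sr s_def algebra_simps power2_eq_square)
    have "(1.8 * pi)^2 \<le> (pi + 2*r)^2" using P by (intro power_mono) auto
    then have "(1.8 * pi)^2 * (2 * s) \<le> (pi + 2*r)^2 * (2 * s)" using s0 by (intro mult_right_mono) auto
    then have "(1.8 * pi)^2 * (2 * s) * 0.94 \<le> (pi + 2*r)^2 * (2 * s) * cos s" using c s0
      by (intro mult_mono) auto
    then show ?thesis using e by simp
  qed
  finally show ?thesis .
qed

lemma ev_nonpos:
  assumes a: "a > 0" and al: "alpha > 0" and lam: "lam \<le> 0"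
  shows "\<not> robin_eigenvalue c a alpha lam"
proof
  assume "robin_eigenvalue c a alpha lam"
  then obtain u u' u'' where nz: "\<exists>x\<in>{c..c+a}. u x \<noteq> 0"
    and d1: "\<forall>x\<in>{c..c+a}. (u has_real_derivative u' x) (at x within {c..c+a})"
    and d2: "\<forall>x\<in>{c..c+a}. (u' has_real_derivative u'' x) (at x within {c..c+a})"
    and eq: "\<forall>x\<in>{c..c+a}. - u'' x = lam * u x"
    and b1: "- u' c + alpha * u c = 0" and b2: "u' (c + a) + alpha * u (c + a) = 0"
    unfolding robin_eigenvalue_def by blast
  define I where "I = {c..c+a}"
  define g where "g x = u x * u' x" for x
  have dg: "(g has_real_derivative (u' x * u' x + u x * u'' x)) (at x within I)" if "x \<in> I" for x
    unfolding g_def using d1 d2 that I_def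
    by (auto intro!: derivative_eq_intros)
  have cg: "continuous_on I g" using dg by (rule DERIV_continuous_on)
  have gpos: "u' x * u' x + u x * u'' x \<ge> 0" if "x \<in> I" for x
  proof -
    have "u'' x = - (lam * u x)" using eq that I_def by (metis minus_minus)
    then have "u x * u'' x = - lam * (u x * u x)" by (simp add: algebra_simps)
    moreover have "- lam * (u x * u x) \<ge> 0" using lam by (simp add: mult_nonpos_nonneg)
    moreover have "u' x * u' x \<ge> 0" by simp
    ultimately show ?thesis by linarith
  qed
  have mono: "g x \<le> g y" if "x \<in> I" "y \<in> I" "x \<le> y" for x y
  proof (rule DERIV_nonneg_imp_increasing_open[OF that(3)])
    fix z assume z: "x < z" "z < y"
    then have zI: "z \<in> I" "c < z" "z < c + a" using that I_def by auto
    have "at z within I = at z" unfolding I_def using zI by (intro at_within_Icc_at) auto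
    then show "\<exists>y. (g has_real_derivative y) (at z) \<and> 0 \<le> y"
      using dg[OF zI(1)] gpos[OF zI(1)] by auto
  next
    show "continuous_on {x..y} g" by (rule continuous_on_subset[OF cg]) (use that I_def in auto)
  qed
  have cI: "c \<in> I" "c + a \<in> I" using a I_def by auto
  have "u' c = alpha * u c" using b1 by linarith
  then have gc: "g c = alpha * (u c)^2" by (simp add: g_def power2_eq_square)
  have "u' (c+a) = - alpha * u (c+a)" using b2 by linarith
  then have ga: "g (c+a) = - alpha * (u (c+a))^2" by (simp add: g_def power2_eq_square)
  have "g c \<le> g (c+a)" using mono cI a by simp
  then have "alpha * (u c)^2 + alpha * (u (c+a))^2 \<le> 0" using gc ga by simp
  moreover have "alpha * (u c)^2 \<ge> 0" "alpha * (u (c+a))^2 \<ge> 0" using al by auto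
  ultimately have "alpha * (u c)^2 = 0" "alpha * (u (c+a))^2 = 0" by linarith+
  then have uc: "u c = 0" and gc0: "g c = 0" and ga0: "g (c+a) = 0" using al gc ga by auto
  have g0: "g x = 0" if "x \<in> I" for x
  proof -
    have "c \<le> x" "x \<le> c + a" using that I_def by auto
    then have "g c \<le> g x" "g x \<le> g (c+a)" using mono[OF cI(1) that] mono[OF that cI(2)] by auto
    then show ?thesis using gc0 ga0 by linarith
  qed
  have dh: "((\<lambda>x. u x * u x) has_real_derivative 0) (at x within I)" if "x \<in> I" for x
  proof -
    have "((\<lambda>x. u x * u x) has_real_derivative (u' x * u x + u x * u' x)) (at x within I)"
      using d1 that I_def by (auto intro!: derivative_eq_intros)
    moreover have "u' x * u x + u x * u' x = 0" using g0[OF that] by (simp add: g_def algebra_simps)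
    ultimately show ?thesis by simp
  qed
  obtain C where C: "\<forall>x\<in>I. u x * u x = C"
    using has_field_derivative_zero_constant[of I "\<lambda>x. u x * u x"] dh I_def by auto
  then have "C = 0" using cI uc by force
  then have "\<forall>x\<in>I. u x = 0" using C by simp
  then show False using nz I_def by auto
qed

lemma ev_pos_nec:
  assumes a: "a > 0" and k: "k > 0" and ev: "robin_eigenvalue c a alpha (k^2)"
  shows "(alpha^2 - k^2) * sin (k*a) + 2*alpha*k*cos (k*a) = 0"
proof -
  obtain u u' u'' where nz: "\<exists>x\<in>{c..c+a}. u x \<noteq> 0"
    and d1: "\<forall>x\<in>{c..c+a}. (u has_real_derivative u' x) (at x within {c..c+a})"
    and d2: "\<forall>x\<in>{c..c+a}. (u' has_real_derivative u'' x) (at x within {c..c+a})"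
    and eq: "\<forall>x\<in>{c..c+a}. - u'' x = k^2 * u x"
    and b1: "- u' c + alpha * u c = 0" and b2: "u' (c + a) + alpha * u (c + a) = 0"
    using ev unfolding robin_eigenvalue_def by blast
  define I where "I = {c..c+a}"
  define A where "A = u c"
  define B where "B = u' c / k"
  define w where "w x = u x - (A * cos (k*(x-c)) + B * sin (k*(x-c)))" for x
  define w' where "w' x = u' x - (- A * k * sin (k*(x-c)) + B * k * cos (k*(x-c)))" for x
  have dw: "(w has_real_derivative w' x) (at x within I)" if "x \<in> I" for x
  proof -
    have "((\<lambda>x. u x - (A * cos (k*(x-c)) + B * sin (k*(x-c)))) has_real_derivative
       (u' x - (A * (- sin (k*(x-c)) * (k * 1)) + B * (cos (k*(x-c)) * (k * 1))))) (at x within I)"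
      using that I_def by (auto intro!: derivative_eq_intros d1[rule_format])
    then show ?thesis unfolding w_def w'_def by (simp add: algebra_simps)
  qed
  have dw': "(w' has_real_derivative (- (k^2) * w x)) (at x within I)" if "x \<in> I" for x
  proof -
    have "(w' has_real_derivative
       (u'' x - (- A * k * (cos (k*(x-c)) * (k * 1)) + B * k * (- sin (k*(x-c)) * (k * 1))))) (at x within I)"
      unfolding w'_def using that I_def by (auto intro!: derivative_eq_intros d2[rule_format])
    moreover have "u'' x = - (k^2 * u x)" using eq that I_def by (metis minus_minus)
    ultimately show ?thesis unfolding w_def by (simp add: algebra_simps power2_eq_square)
  qed
  define E where "E x = (w' x)^2 + k^2 * (w x)^2" for x
  have dE: "(E has_real_derivative 0) (at x within I)" if "x \<in> I" for x
  proof -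
    have "(E has_real_derivative (2 * w' x * (- (k^2) * w x) + k^2 * (2 * w x * w' x))) (at x within I)"
      unfolding E_def using dw[OF that] dw'[OF that]
      by (auto intro!: derivative_eq_intros)
    then show ?thesis by (simp add: algebra_simps)
  qed
  obtain C where C: "\<forall>x\<in>I. E x = C"
    using has_field_derivative_zero_constant[of I E] dE I_def by auto
  have cI: "c \<in> I" "c + a \<in> I" using a I_def by auto
  have "w c = 0" by (simp add: w_def A_def)
  moreover have "w' c = 0" using k by (simp add: w'_def B_def)
  ultimately have "E c = 0" by (simp add: E_def)
  then have E0: "E x = 0" if "x \<in> I" for x using C cI that by metis
  have w0: "w x = 0 \<and> w' x = 0" if "x \<in> I" for x
  proof -
    have "(w' x)^2 + k^2 * (w x)^2 = 0" using E0[OF that] by (simp add: E_def)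
    moreover have "(w' x)^2 \<ge> 0" "k^2 * (w x)^2 \<ge> 0" by auto
    ultimately have "(w' x)^2 = 0" "k^2 * (w x)^2 = 0" by linarith+
    then show ?thesis using k by simp
  qed
  have ua: "u (c+a) = A * cos (k*a) + B * sin (k*a)" using w0[OF cI(2)] by (simp add: w_def)
  have ua': "u' (c+a) = - A * k * sin (k*a) + B * k * cos (k*a)" using w0[OF cI(2)] by (simp add: w'_def)
  have Bk: "B * k = alpha * A" using b1 k by (simp add: B_def A_def)
  have "0 = k * (u' (c + a) + alpha * u (c + a))" using b2 by simp
  also have "\<dots> = A * ((alpha^2 - k^2) * sin (k*a) + 2*alpha*k*cos (k*a))"
  proof -
    have "k * (u' (c + a) + alpha * u (c + a)) = - A * k * k * sin (k*a) + (B * k) * k * cos (k*a)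
        + alpha * k * A * cos (k*a) + alpha * (B * k) * sin (k*a)"
      unfolding ua ua' by (simp add: algebra_simps)
    also have "\<dots> = A * ((alpha^2 - k^2) * sin (k*a) + 2*alpha*k*cos (k*a))"
      unfolding Bk by (simp add: algebra_simps power2_eq_square)
    finally show ?thesis .
  qed
  finally have prod: "A * ((alpha^2 - k^2) * sin (k*a) + 2*alpha*k*cos (k*a)) = 0" by simp
  have "A \<noteq> 0"
  proof
    assume A0: "A = 0"
    then have "B = 0" using Bk k by simp
    then have "u x = 0" if "x \<in> I" for x using w0[OF that] A0 by (simp add: w_def)
    then show False using nz I_def by auto
  qed
  then show ?thesis using prod by simp
qed

lemma ev_pos_suff:
  assumes a: "a \<ge> 0" and k: "k > 0"
    and F: "(alpha^2 - k^2) * sin (k*a) + 2*alpha*k*cos (k*a) = 0"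
  shows "robin_eigenvalue c a alpha (k^2)"
  unfolding robin_eigenvalue_def
proof (intro exI conjI)
  let ?u = "\<lambda>x. cos (k*(x-c)) + alpha/k * sin (k*(x-c))"
  let ?u' = "\<lambda>x. - k * sin (k*(x-c)) + alpha * cos (k*(x-c))"
  let ?u'' = "\<lambda>x. (- (k^2)) * cos (k*(x-c)) - alpha * k * sin (k*(x-c))"
  show "\<exists>x\<in>{c..c+a}. ?u x \<noteq> 0" using a by (intro bexI[of _ c]) auto
  show "\<forall>x\<in>{c..c+a}. (?u has_real_derivative ?u' x) (at x within {c..c+a})"
    using k by (auto intro!: derivative_eq_intros simp: algebra_simps)
  show "\<forall>x\<in>{c..c+a}. (?u' has_real_derivative ?u'' x) (at x within {c..c+a})"
    by (auto intro!: derivative_eq_intros simp: algebra_simps power2_eq_square)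
  show "continuous_on {c..c+a} ?u''" by (intro continuous_intros)
  show "\<forall>x\<in>{c..c+a}. - ?u'' x = k^2 * ?u x"
    using k by (auto simp: algebra_simps power2_eq_square)
  show "- ?u' c + alpha * ?u c = 0" by simp
  have "?u' (c + a) + alpha * ?u (c + a) = ((alpha^2 - k^2) * sin (k*a) + 2*alpha*k*cos (k*a)) / k"
    using k by (simp add: field_simps power2_eq_square)
  then show "?u' (c + a) + alpha * ?u (c + a) = 0" using F by simp
qed

lemma lower_bd:
  fixes a alpha r :: real
  assumes a: "a > 0" and al: "alpha > 0" and r: "0 < r" "r < pi/2"
    and rel: "a * alpha * cos r = (pi + 2*r) * sin r"
  shows "(2*pi - a*alpha + sqrt (4*pi^2 + 12*a*alpha*pi + alpha^2*a^2))^2 / (16*a^2) \<le> ((pi + 2*r)/a)^2"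
proof -
  define m where "m = a * alpha"
  have m0: "m > 0" using a al by (simp add: m_def)
  have cp: "cos r > 0" using r by (intro cos_gt_zero) auto
  have "(pi + 2*r) * ((pi/2 - r) * sin r) \<le> (pi + 2*r) * (2 * r * cos r)"
    using T2[OF r] r by (intro mult_left_mono) auto
  then have "2 * ((pi + 2*r) * ((pi/2 - r) * sin r)) \<le> (4*r*(pi + 2*r)) * cos r"
    by (simp add: algebra_simps)
  moreover have "(m * (pi - 2*r)) * cos r = 2 * ((pi + 2*r) * ((pi/2 - r) * sin r))"
  proof -
    have "(m * (pi - 2*r)) * cos r = (pi - 2*r) * (a * alpha * cos r)" by (simp add: m_def algebra_simps)
    also have "\<dots> = (pi - 2*r) * ((pi + 2*r) * sin r)" by (simp only: rel)
    also have "\<dots> = 2 * ((pi + 2*r) * ((pi/2 - r) * sin r))" by (simp add: algebra_simps)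
    finally show ?thesis .
  qed
  ultimately have "(m * (pi - 2*r)) * cos r \<le> (4*r*(pi + 2*r)) * cos r" by simp
  then have key: "m * (pi - 2*r) \<le> 4*r*(pi + 2*r)" using cp by simp
  define D where "D = 4*pi^2 + 12*a*alpha*pi + alpha^2*a^2"
  have Dm: "D = 4*pi^2 + 12*m*pi + m^2" by (simp add: D_def m_def power2_eq_square algebra_simps)
  have "(2*pi + 8*r + m)^2 - D = 8 * (4*r*(pi + 2*r) - m * (pi - 2*r))"
    by (simp add: Dm power2_eq_square algebra_simps)
  then have "D \<le> (2*pi + 8*r + m)^2" using key by simp
  then have s1: "sqrt D \<le> 2*pi + 8*r + m"
    using m0 r pi_gt_zero by (metis real_sqrt_le_mono real_sqrt_abs abs_of_nonneg add_nonneg_nonneg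
        less_imp_le mult_nonneg_nonneg zero_le_numeral)
  have "D - (m - 2*pi)^2 = 16*m*pi" by (simp add: Dm power2_eq_square algebra_simps)
  then have "(m - 2*pi)^2 \<le> D" using m0 pi_gt_zero by (smt (verit) mult_pos_pos)
  then have s2: "m - 2*pi \<le> sqrt D" by (rule real_le_rsqrt)
  define X where "X = 2*pi - m + sqrt D"
  have X0: "0 \<le> X" "X \<le> 4*(pi + 2*r)" using s1 s2 by (auto simp: X_def)
  then have "X^2 \<le> (4*(pi + 2*r))^2" by (intro power_mono) auto
  then have "X^2 / (16*a^2) \<le> (4*(pi + 2*r))^2 / (16*a^2)" using a by (intro divide_right_mono) auto
  also have "\<dots> = ((pi + 2*r)/a)^2" using a by (simp add: power2_eq_square field_simps)
  finally show ?thesis by (simp add: X_def D_def m_def)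
qed

lemma upper_bd1:
  fixes a alpha r :: real
  assumes a: "a > 0" and al: "alpha > 0" and r: "0 < r" "r < pi/2"
    and rel: "a * alpha * cos r = (pi + 2*r) * sin r"
  shows "((pi + 2*r)/a)^2 \<le> (pi/(2*a) + sqrt (pi^2/(4*a^2) + 2*alpha/a))^2"
proof -
  define m where "m = a * alpha"
  have cp: "cos r > 0" using r by (intro cos_gt_zero) auto
  have "(pi + 2*r) * (r * cos r) \<le> (pi + 2*r) * sin r"
    using T1[of r] r by (intro mult_left_mono) auto
  then have "(r * (pi + 2*r)) * cos r \<le> m * cos r" using rel unfolding m_def by (simp add: algebra_simps)
  then have key: "r * (pi + 2*r) \<le> m" using cp by simp
  define Y where "Y = (pi/2 + 2*r)/a"
  have Y0: "Y \<ge> 0" using a r pi_gt_zero by (simp add: Y_def)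
  have "Y^2 = (pi^2/4 + 2 * (r * (pi + 2*r))) / a^2" by (simp add: Y_def power2_eq_square field_simps)
  also have "\<dots> \<le> (pi^2/4 + 2 * m) / a^2" using key a by (intro divide_right_mono) auto
  also have "\<dots> = pi^2/(4*a^2) + 2*alpha/a" using a by (simp add: m_def power2_eq_square field_simps)
  finally have "Y \<le> sqrt (pi^2/(4*a^2) + 2*alpha/a)" by (rule real_le_rsqrt)
  moreover have "(pi + 2*r)/a = pi/(2*a) + Y" using a by (simp add: Y_def field_simps)
  ultimately have "(pi + 2*r)/a \<le> pi/(2*a) + sqrt (pi^2/(4*a^2) + 2*alpha/a)" by simp
  moreover have "0 \<le> (pi + 2*r)/a" using a r pi_gt_zero by simp
  ultimately show ?thesis by (intro power_mono) auto
qed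

lemma upper_bd2:
  fixes a alpha r :: real
  assumes a: "a > 0" and al: "alpha > 0" and r: "0 < r" "r < pi/2"
    and rel: "a * alpha * cos r = (pi + 2*r) * sin r"
  shows "((pi + 2*r)/a)^2 \<le> pi^2/(16*a^4*alpha^2) * (4*a*alpha - pi^2 + sqrt (pi^4 + 16*a^2*alpha^2))^2"
proof -
  define m where "m = a * alpha"
  have m0: "m > 0" using a al by (simp add: m_def)
  have cp: "cos r > 0" using r by (intro cos_gt_zero) auto
  have "pi^3 * r * cos r \<le> (pi^2 - 4*r^2) * (m * cos r)" using T3[OF r] rel unfolding m_def
    by (simp add: algebra_simps)
  then have "(r * pi^3) * cos r \<le> (m * (pi^2 - 4*r^2)) * cos r" by (simp add: algebra_simps)
  then have key: "r * pi^3 \<le> m * (pi^2 - 4*r^2)" using cp by simp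
  define S where "S = sqrt (pi^4 + 16*m^2)"
  have "pi^2 * (pi^4 + 16*m^2) - (8*m*r + pi^3)^2 = 16 * m * (m * (pi^2 - 4*r^2) - r * pi^3)"
    by (simp add: power2_eq_square algebra_simps power3_eq_cube power4_eq_xxxx)
  also have "\<dots> \<ge> 0" using key m0 by simp
  finally have "(8*m*r + pi^3)^2 \<le> pi^2 * (pi^4 + 16*m^2)" by simp
  then have "8*m*r + pi^3 \<le> sqrt (pi^2 * (pi^4 + 16*m^2))" by (rule real_le_rsqrt)
  also have "\<dots> = pi * S" by (simp add: S_def real_sqrt_mult)
  finally have ps: "8*m*r + pi^3 \<le> pi * S" .
  define Z where "Z = 4*m - pi^2 + S"
  have "4*m*(pi + 2*r) \<le> pi * Z" using ps by (simp add: Z_def algebra_simps power2_eq_square power3_eq_cube)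
  then have "4*m*(pi + 2*r) / (4*a*m) \<le> pi * Z / (4*a*m)" using a m0 by (intro divide_right_mono) auto
  moreover have "4*m*(pi + 2*r) / (4*a*m) = (pi + 2*r)/a" using a m0 by (simp add: field_simps)
  ultimately have le: "(pi + 2*r)/a \<le> pi * Z / (4*a*m)" by simp
  moreover have "0 \<le> (pi + 2*r)/a" using a r pi_gt_zero by simp
  ultimately have "((pi + 2*r)/a)^2 \<le> (pi * Z / (4*a*m))^2" by (intro power_mono) auto
  also have "\<dots> = pi^2/(16*a^4*alpha^2) * (4*a*alpha - pi^2 + sqrt (pi^4 + 16*a^2*alpha^2))^2"
  proof -
    have "16*m^2 = 16*a^2*alpha^2" by (simp add: m_def power2_eq_square)
    then have Zeq: "Z = 4*a*alpha - pi^2 + sqrt (pi^4 + 16*a^2*alpha^2)" by (simp add: Z_def S_def m_def)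
    have "(pi * Z / (4*a*m))^2 = pi^2/(16*a^4*alpha^2) * Z^2"
      using a al by (simp add: m_def power2_eq_square power4_eq_xxxx field_simps)
    then show ?thesis unfolding Zeq .
  qed
  finally show ?thesis .
qed

lemma Ffact0:
  fixes a b h :: real assumes a: "a > 0"
  shows "((2 * b/a)^2 - (2 * h/a)^2) * sin (2 * h) + 2 * (2 * b/a) * (2 * h/a) * cos (2 * h)
       = 8/a^2 * (b * cos h - h * sin h) * (b * sin h + h * cos h)"
  unfolding sin_double cos_double using a by (simp add: field_simps power2_eq_square)

lemma Ffact:
  fixes a alpha k :: real assumes a: "a > 0"
  shows "(alpha^2 - k^2) * sin (k * a) + 2 * alpha * k * cos (k * a)
       = 8/a^2 * ((a * alpha/2) * cos (k * a/2) - (k * a/2) * sin (k * a/2))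
               * ((a * alpha/2) * sin (k * a/2) + (k * a/2) * cos (k * a/2))"
proof -
  have "2 * (a * alpha/2)/a = alpha" "2 * (k * a/2)/a = k" "2 * (k * a/2) = k * a" using a by auto
  then show ?thesis using Ffact0[OF a, of "a * alpha/2" "k * a/2"] by simp
qed

lemma root_unique:
  fixes p b x y :: real
  assumes p: "p \<ge> 0" and x: "0 < x" "x < pi/2" and y: "0 < y" "y < pi/2"
    and ex: "(p + x) * sin x = b * cos x" and ey: "(p + y) * sin y = b * cos y"
  shows "x = y"
proof -
  have tx: "(p + x) * tan x = b" using ex cos_gt_zero[OF x] by (simp add: tan_def field_simps)
  have ty: "(p + y) * tan y = b" using ey cos_gt_zero[OF y] by (simp add: tan_def field_simps)
  have lt: False if "0 < u" "u < v" "v < pi/2" "(p + u) * tan u = b" "(p + v) * tan v = b" for u v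
  proof -
    have "tan u < tan v" using that by (intro tan_monotone) auto
    moreover have "tan u > 0" using that by (intro tan_gt_zero) auto
    ultimately have "(p + u) * tan u < (p + v) * tan v" using that p
      by (intro mult_strict_mono) auto
    then show False using that by simp
  qed
  show ?thesis
  proof (rule ccontr)
    assume "x \<noteq> y"
    then have "x < y \<or> y < x" by auto
    then show False using lt[of x y] lt[of y x] x y tx ty by auto
  qed
qed

lemma lambda2_eq:
  fixes c a alpha :: real
  assumes a: "a > 0" and al: "alpha > 0"
  obtains r where "0 < r" "r < pi/2" "a * alpha * cos r = (pi + 2 * r) * sin r"
    "robin_lambda2 c a alpha = ((pi + 2 * r) / a)^2"
proof -
  define b where "b = a * alpha / 2"
  have b0: "b > 0" using a al by (simp add: b_def)
  define f1 where "f1 h = (0 + h) * sin h - b * cos h" for h :: real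
  have "continuous_on {0..pi/2} f1" unfolding f1_def by (intro continuous_intros)
  moreover have "f1 0 \<le> 0" "0 \<le> f1 (pi/2)" using b0 by (auto simp: f1_def)
  ultimately obtain h1 where h1: "0 \<le> h1" "h1 \<le> pi/2" "f1 h1 = 0"
    using IVT'[of f1 0 0 "pi/2"] by auto
  have "h1 \<noteq> 0" using h1 b0 by (auto simp: f1_def)
  moreover have "h1 \<noteq> pi/2"
  proof
    assume eq: "h1 = pi/2"
    have "f1 h1 = pi/2" unfolding eq by (simp add: f1_def)
    then show False using h1(3) by simp
  qed
  ultimately have h1': "0 < h1" "h1 < pi/2" using h1 by auto
  have eh1: "(0 + h1) * sin h1 = b * cos h1" using h1 by (simp add: f1_def)
  define f2 where "f2 r = (pi/2 + r) * sin r - b * cos r" for r :: real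
  have "continuous_on {0..pi/2} f2" unfolding f2_def by (intro continuous_intros)
  moreover have "f2 0 \<le> 0" "0 \<le> f2 (pi/2)" using b0 by (auto simp: f2_def)
  ultimately obtain r2 where r2: "0 \<le> r2" "r2 \<le> pi/2" "f2 r2 = 0"
    using IVT'[of f2 0 0 "pi/2"] by auto
  have "r2 \<noteq> 0" using r2 b0 by (auto simp: f2_def)
  moreover have "r2 \<noteq> pi/2"
  proof
    assume eq: "r2 = pi/2"
    have "f2 r2 = pi" unfolding eq by (simp add: f2_def)
    then show False using r2(3) by simp
  qed
  ultimately have r2': "0 < r2" "r2 < pi/2" using r2 by auto
  have er2: "(pi/2 + r2) * sin r2 = b * cos r2" using r2 by (simp add: f2_def)
  define h2 where "h2 = pi/2 + r2"
  define k1 where "k1 = 2 * h1 / a"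
  define k2 where "k2 = 2 * h2 / a"
  define L1 where "L1 = k1^2"
  define L2 where "L2 = k2^2"
  let ?EV = "robin_eigenvalue c a alpha"
  have k1: "k1 > 0" "k1 * a / 2 = h1" using a h1' by (auto simp: k1_def)
  have k2: "k2 > 0" "k2 * a / 2 = h2" using a r2' by (auto simp: k2_def h2_def)
  have sh2: "sin h2 = cos r2" "cos h2 = - sin r2" by (simp_all add: h2_def sin_add cos_add)
  have EV1: "?EV L1" unfolding L1_def
    by (rule ev_pos_suff) (use a k1 eh1 Ffact[OF a, of alpha k1] in \<open>auto simp: b_def\<close>)
  have EV2: "?EV L2" unfolding L2_def
  proof (rule ev_pos_suff)
    have "(a * alpha / 2) * sin h2 + h2 * cos h2 = 0" using er2 sh2 by (simp add: b_def h2_def)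
    then show "(alpha^2 - k2^2) * sin (k2 * a) + 2 * alpha * k2 * cos (k2 * a) = 0"
      using Ffact[OF a, of alpha k2] k2 by simp
  qed (use a k2 in auto)
  have k12: "k1 < k2" using h1' r2' a by (simp add: k1_def k2_def h2_def divide_strict_right_mono)
  have L12: "L1 < L2" unfolding L1_def L2_def using k12 k1 by (intro power_strict_mono) auto
  have S2: "{mu. ?EV mu \<and> mu < L2} = {L1}"
  proof (intro equalityI subsetI)
    fix mu assume "mu \<in> {mu. ?EV mu \<and> mu < L2}"
    then have ev: "?EV mu" and lt: "mu < L2" by auto
    have mu0: "mu > 0" using ev_nonpos[OF a al, of mu c] ev by force
    define k where "k = sqrt mu"
    have k0: "k > 0" and kk: "k^2 = mu" using mu0 by (auto simp: k_def)
    have "k^2 < k2^2" using lt kk by (simp add: L2_def)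
    then have "k < k2" using k2 by (intro power_less_imp_less_base[of k 2 k2]) auto
    define h where "h = k * a / 2"
    have ka: "k * a / 2 < k2 * a / 2" using \<open>k < k2\<close> a by simp
    have "h < h2" unfolding h_def k2(2)[symmetric] by (rule ka)
    then have h0: "0 < h" "h < h2" using k0 a by (auto simp: h_def)
    have h2pi: "h2 < pi" using r2' by (simp add: h2_def)
    have F: "(alpha^2 - k^2) * sin (k * a) + 2 * alpha * k * cos (k * a) = 0"
      using ev_pos_nec[OF a k0] ev kk by simp
    then have "(b * cos h - h * sin h) * (b * sin h + h * cos h) = 0"
      using Ffact[OF a, of alpha k] a by (simp add: b_def h_def)
    then have cases: "b * cos h = h * sin h \<or> b * sin h + h * cos h = 0" by auto
    have "h = h1"
    proof (cases "b * cos h = h * sin h")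
      case True
      show ?thesis
      proof (cases "h < pi/2")
        case True2: True
        show ?thesis using root_unique[of 0 h h1 b] True True2 h0 h1' eh1 by simp
      next
        case False
        have "sin h > 0" using h0 h2pi by (intro sin_gt_zero) auto
        moreover have "cos h \<le> 0"
        proof -
          have "cos h = - sin (h - pi/2)" by (simp add: sin_diff)
          moreover have "sin (h - pi/2) \<ge> 0" using False h0 h2pi by (intro sin_ge_zero) auto
          ultimately show ?thesis by simp
        qed
        then have "b * cos h \<le> 0" using b0 by (simp add: mult_nonneg_nonpos)
        moreover have "h * sin h > 0" using h0 \<open>sin h > 0\<close> by simp
        ultimately have "b * cos h < h * sin h" by linarith
        then show ?thesis using True by simp
      qed
    next
      case False
      then have eq: "b * sin h + h * cos h = 0" using cases by simp
      show ?thesis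
      proof (cases "h \<le> pi/2")
        case True
        have "sin h > 0" using h0 True by (intro sin_gt_zero) auto
        moreover have "cos h \<ge> 0" using h0 True by (intro cos_ge_zero) auto
        then have "h * cos h \<ge> 0" using h0 by simp
        moreover have "b * sin h > 0" using b0 \<open>sin h > 0\<close> by simp
        ultimately have "b * sin h + h * cos h > 0" by linarith
        then show ?thesis using eq by simp
      next
        case False
        define r where "r = h - pi/2"
        have r: "0 < r" "r < pi/2" using False h0 r2' by (auto simp: r_def h2_def)
        have "sin h = cos r" "cos h = - sin r" by (simp_all add: r_def sin_diff cos_diff)
        then have "(pi/2 + r) * sin r = b * cos r" using eq by (simp add: r_def algebra_simps)
        then have "r = r2" using root_unique[of "pi/2" r r2 b] r r2' er2 by simp
        then show ?thesis using h0 by (simp add: r_def h2_def)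
      qed
    qed
    then have "k = k1" using a by (simp add: h_def k1_def field_simps)
    then show "mu \<in> {L1}" using kk by (simp add: L1_def)
  next
    fix mu assume "mu \<in> {L1}"
    then show "mu \<in> {mu. ?EV mu \<and> mu < L2}" using EV1 L12 by auto
  qed
  have lam2: "robin_lambda2 c a alpha = L2"
    unfolding robin_lambda2_def
  proof (rule the_equality)
    show "?EV L2 \<and> card {mu. ?EV mu \<and> mu < L2} = 1" using EV2 S2 by simp
  next
    fix lam assume P: "?EV lam \<and> card {mu. ?EV mu \<and> mu < lam} = 1"
    show "lam = L2"
    proof (rule ccontr)
      assume ne: "lam \<noteq> L2"
      show False
      proof (cases "lam < L2")
        case True
        then have "lam \<in> {mu. ?EV mu \<and> mu < L2}" using P by simp
        then have lamL1: "lam = L1" unfolding S2 by simp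
        have "{mu. ?EV mu \<and> mu < lam} = {}"
        proof (rule ccontr)
          assume "{mu. ?EV mu \<and> mu < lam} \<noteq> {}"
          then obtain mu where mu: "?EV mu" "mu < L1" using lamL1 by blast
          then have "mu \<in> {mu. ?EV mu \<and> mu < L2}" using L12 by simp
          then have "mu = L1" unfolding S2 by simp
          then show False using mu by simp
        qed
        then have "card {mu. ?EV mu \<and> mu < lam} = 0" by (simp only: card.empty)
        then show False using P by linarith
      next
        case False
        then have "L2 < lam" using ne by simp
        then have i1: "L1 \<in> {mu. ?EV mu \<and> mu < lam}" "L2 \<in> {mu. ?EV mu \<and> mu < lam}"
          using EV1 EV2 L12 by simp_all
        have "card {mu. ?EV mu \<and> mu < lam} = 1" using P by simp
        then obtain z where z: "{mu. ?EV mu \<and> mu < lam} = {z}"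
          by (rule card_1_singletonE)
        have "L1 = z" "L2 = z" using i1 unfolding z by simp_all
        then show False using L12 by simp
      qed
    qed
  qed
  show ?thesis
  proof (rule that[OF r2'])
    show "a * alpha * cos r2 = (pi + 2 * r2) * sin r2" using er2 by (simp add: b_def algebra_simps)
    show "robin_lambda2 c a alpha = ((pi + 2 * r2) / a)^2"
    proof -
      have "k2 = (pi + 2 * r2) / a" using a by (simp add: k2_def h2_def field_simps)
      then show ?thesis using lam2 by (simp add: L2_def)
    qed
  qed
qed

theorem propositionA2:
  fixes c a alpha :: real
  assumes "a > 0" and "alpha > 0"
  shows "(2*pi - a*alpha + sqrt (4*pi^2 + 12*a*alpha*pi + alpha^2*a^2))^2 / (16*a^2)
           \<le> robin_lambda2 c a alpha
    \<and> (a*alpha \<le> pi^2/2 \<longrightarrow>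
           robin_lambda2 c a alpha \<le> (pi/(2*a) + sqrt (pi^2/(4*a^2) + 2*alpha/a))^2)
    \<and> (a*alpha \<ge> pi^2/2 \<longrightarrow>
           robin_lambda2 c a alpha
             \<le> pi^2/(16*a^4*alpha^2) * (4*a*alpha - pi^2 + sqrt (pi^4 + 16*a^2*alpha^2))^2)"
proof -
  obtain r where r: "0 < r" "r < pi/2" and rel: "a * alpha * cos r = (pi + 2 * r) * sin r"
    and lam: "robin_lambda2 c a alpha = ((pi + 2 * r) / a)^2"
    using lambda2_eq[OF assms, of c] by blast
  show ?thesis unfolding lam
    using lower_bd[OF assms r rel] upper_bd1[OF assms r rel] upper_bd2[OF assms r rel] by simp
qed

end
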